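(* Let $\mathcal A$ be a unital nuclear C$^*$-algebra, $\mathcal H$ a Hilbert space, $\psi:\mathcal A\to B(\mathcal H)$ a positive linear map and $n\in\mathbb N$. If $a_{-n+1},\dots,a_{n-1}\in\mathcal A$ are such that the Toeplitz matrix $[a_{i-j}]_{i,j=0}^{n-1}\in M_n(\mathcal A)$ is positive, then the operator matrix $[\psi(a_{i-j})]_{i,j=0}^{n-1}$ is a positive operator on $\bigoplus_1^n\mathcal H$. *)

theory Defs
  imports "HOL-Analysis.Analysis"
begin

class complex_vector = real_vector +
  fixes cscale :: "complex \<Rightarrow> 'a \<Rightarrow> 'a"  (infixr \<open>*\<^sub>C\<close> 75)
  assumes cscale_add_right: "c *\<^sub>C (x + y) = c *\<^sub>C x + c *\<^sub>C y"
    and cscale_add_left: "(c + d) *\<^sub>C x = c *\<^sub>C x + d *\<^sub>C x"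
    and cscale_cscale: "c *\<^sub>C (d *\<^sub>C x) = (c * d) *\<^sub>C x"
    and cscale_one: "1 *\<^sub>C x = x"
    and scaleR_cscale: "r *\<^sub>R x = complex_of_real r *\<^sub>C x"

class complex_normed_vector = complex_vector + real_normed_vector +
  assumes norm_cscale: "norm (c *\<^sub>C x) = cmod c * norm x"

class cstar_algebra = complex_normed_vector + real_normed_algebra_1 + banach +
  fixes adj :: "'a \<Rightarrow> 'a"
  assumes cscale_mult_left: "c *\<^sub>C (x * y) = (c *\<^sub>C x) * y"
    and cscale_mult_right: "c *\<^sub>C (x * y) = x * (c *\<^sub>C y)"
    and adj_adj: "adj (adj x) = x"
    and adj_add: "adj (x + y) = adj x + adj y"
    and adj_cscale: "adj (c *\<^sub>C x) = cnj c *\<^sub>C adj x"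
    and adj_mult: "adj (x * y) = adj y * adj x"
    and cstar_identity: "norm (adj x * x) = norm x * norm x"

class complex_inner = complex_normed_vector +
  fixes cinner :: "'a \<Rightarrow> 'a \<Rightarrow> complex"
  assumes cinner_add_left: "cinner (x + y) z = cinner x z + cinner y z"
    and cinner_cscale_left: "cinner (c *\<^sub>C x) y = c * cinner x y"
    and cinner_commute: "cinner y x = cnj (cinner x y)"
    and cinner_zero_iff: "cinner x x = 0 \<longleftrightarrow> x = 0"
    and norm_eq_sqrt_cinner: "norm x = sqrt (Re (cinner x x))"

definition cnonneg :: "complex \<Rightarrow> bool" where
  "cnonneg z \<longleftrightarrow> Im z = 0 \<and> 0 \<le> Re z"

definition bounded_clinear_op :: "('h::complex_normed_vector \<Rightarrow> 'h) \<Rightarrow> bool" where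
  "bounded_clinear_op T \<longleftrightarrow>
     (\<forall>x y. T (x + y) = T x + T y) \<and> (\<forall>c x. T (c *\<^sub>C x) = c *\<^sub>C T x) \<and>
     (\<exists>K. \<forall>x. norm (T x) \<le> norm x * K)"

definition cstar_pos :: "'a::cstar_algebra \<Rightarrow> bool" where
  "cstar_pos a \<longleftrightarrow> (\<exists>b. a = adj b * b)"

text \<open>Positive elements of the C*-algebra M_n(A) (matrices indexed by 0..n-1):
  those of the form Y* Y with Y in M_n(A).\<close>
definition mat_pos :: "nat \<Rightarrow> (nat \<Rightarrow> nat \<Rightarrow> 'a::cstar_algebra) \<Rightarrow> bool" where
  "mat_pos n X \<longleftrightarrow> (\<exists>Y. \<forall>i<n. \<forall>j<n. X i j = (\<Sum>k<n. adj (Y k i) * Y k j))"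

definition op_pos :: "('h::complex_inner \<Rightarrow> 'h) \<Rightarrow> bool" where
  "op_pos T \<longleftrightarrow> (\<forall>x. cnonneg (cinner (T x) x))"

definition positive_map :: "('a::cstar_algebra \<Rightarrow> 'h::complex_inner \<Rightarrow> 'h) \<Rightarrow> bool" where
  "positive_map \<psi> \<longleftrightarrow>
     (\<forall>a. bounded_clinear_op (\<psi> a)) \<and>
     (\<forall>a b. \<psi> (a + b) = (\<lambda>h. \<psi> a h + \<psi> b h)) \<and>
     (\<forall>c a. \<psi> (c *\<^sub>C a) = (\<lambda>h. c *\<^sub>C \<psi> a h)) \<and>
     (\<forall>a. cstar_pos a \<longrightarrow> op_pos (\<psi> a))"

text \<open>Positivity of an n\<times>n operator matrix [T i j] acting on the direct sum of n
  copies of H.\<close>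
definition opmat_pos :: "nat \<Rightarrow> (nat \<Rightarrow> nat \<Rightarrow> 'h::complex_inner \<Rightarrow> 'h) \<Rightarrow> bool" where
  "opmat_pos n T \<longleftrightarrow>
     (\<forall>x::nat \<Rightarrow> 'h. cnonneg (\<Sum>i<n. \<Sum>j<n. cinner (T i j (x j)) (x i)))"

text \<open>Complex k\<times>k matrices are represented as functions nat \<Rightarrow> nat \<Rightarrow> complex,
  only entries with indices < k being relevant.\<close>

definition cvec_norm :: "nat \<Rightarrow> (nat \<Rightarrow> complex) \<Rightarrow> real" where
  "cvec_norm k v = sqrt (\<Sum>p<k. (cmod (v p))\<^sup>2)"

definition cmat_norm :: "nat \<Rightarrow> (nat \<Rightarrow> nat \<Rightarrow> complex) \<Rightarrow> real" where
  "cmat_norm k X = Sup {cvec_norm k (\<lambda>p. \<Sum>q<k. X p q * v q) | v. cvec_norm k v \<le> 1}"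

text \<open>Positivity of an element of M_m(M_k(C)) = M_{mk}(C) (block matrix), as a
  positive semidefinite matrix.\<close>
definition block_cmat_pos :: "nat \<Rightarrow> nat \<Rightarrow> (nat \<Rightarrow> nat \<Rightarrow> nat \<Rightarrow> nat \<Rightarrow> complex) \<Rightarrow> bool" where
  "block_cmat_pos m k X \<longleftrightarrow>
     (\<forall>v::nat \<Rightarrow> nat \<Rightarrow> complex.
        cnonneg (\<Sum>i<m. \<Sum>j<m. \<Sum>p<k. \<Sum>q<k. cnj (v i p) * X i j p q * v j q))"

definition ccp_to_mat :: "nat \<Rightarrow> ('a::cstar_algebra \<Rightarrow> nat \<Rightarrow> nat \<Rightarrow> complex) \<Rightarrow> bool" where
  "ccp_to_mat k \<phi> \<longleftrightarrow>
     (\<forall>a b. \<forall>p<k. \<forall>q<k. \<phi> (a + b) p q = \<phi> a p q + \<phi> b p q) \<and>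
     (\<forall>c a. \<forall>p<k. \<forall>q<k. \<phi> (c *\<^sub>C a) p q = c * \<phi> a p q) \<and>
     (\<forall>m X. mat_pos m X \<longrightarrow> block_cmat_pos m k (\<lambda>i j. \<phi> (X i j))) \<and>
     (\<forall>a. cmat_norm k (\<phi> a) \<le> norm a)"

definition ccp_from_mat :: "nat \<Rightarrow> ((nat \<Rightarrow> nat \<Rightarrow> complex) \<Rightarrow> 'a::cstar_algebra) \<Rightarrow> bool" where
  "ccp_from_mat k \<theta> \<longleftrightarrow>
     (\<forall>X Y. (\<forall>p<k. \<forall>q<k. X p q = Y p q) \<longrightarrow> \<theta> X = \<theta> Y) \<and>
     (\<forall>X Y. \<theta> (\<lambda>p q. X p q + Y p q) = \<theta> X + \<theta> Y) \<and>
     (\<forall>c X. \<theta> (\<lambda>p q. c * X p q) = c *\<^sub>C \<theta> X) \<and>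
     (\<forall>m X. block_cmat_pos m k X \<longrightarrow> mat_pos m (\<lambda>i j. \<theta> (X i j))) \<and>
     (\<forall>X. norm (\<theta> X) \<le> cmat_norm k X)"

text \<open>A C*-algebra is nuclear iff its identity map is approximated in the point-norm
  topology by c.c.p. maps factoring through matrix algebras (Brown--Ozawa, Def. 2.3.1/2.3.2).\<close>
definition nuclear :: "'a::cstar_algebra itself \<Rightarrow> bool" where
  "nuclear _ \<longleftrightarrow>
     (\<forall>F::'a set. \<forall>\<epsilon>>0. finite F \<longrightarrow>
        (\<exists>k \<phi> \<theta>. ccp_to_mat k \<phi> \<and> ccp_from_mat k \<theta> \<and>
           (\<forall>a\<in>F. norm (\<theta> (\<phi> a) - a) < \<epsilon>)))"

end

theory Submission
  imports Defs "HOL-Computational_Algebra.Formal_Power_Series"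
begin

context complex_vector begin
lemma cscale_zero_right[simp]: "c *\<^sub>C 0 = 0"
  using cscale_add_right[of c 0 0] by simp
lemma cscale_zero_left[simp]: "0 *\<^sub>C x = 0"
  using cscale_add_left[of 0 0 x] by simp
lemma cscale_minus_right: "c *\<^sub>C (- x) = - (c *\<^sub>C x)"
  proof -
  have "c *\<^sub>C x + c *\<^sub>C (- x) = 0" using cscale_add_right[of c x "-x"] by simp
  then show ?thesis by (rule minus_unique[symmetric])
qed
lemma cscale_diff_right: "c *\<^sub>C (x - y) = c *\<^sub>C x - c *\<^sub>C y"
  using cscale_add_right[of c x "-y"] by (simp add: cscale_minus_right)
lemma cscale_minus_left: "(- c) *\<^sub>C x = - (c *\<^sub>C x)"
  proof -
  have "c *\<^sub>C x + (- c) *\<^sub>C x = 0" using cscale_add_left[of c "-c" x] by simp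
  then show ?thesis by (rule minus_unique[symmetric])
qed
lemma cscale_diff_left: "(c - d) *\<^sub>C x = c *\<^sub>C x - d *\<^sub>C x"
  using cscale_add_left[of c "-d" x] by (simp add: cscale_minus_left)
lemma cscale_of_real: "complex_of_real r *\<^sub>C x = r *\<^sub>R x"
  by (simp add: scaleR_cscale)
lemma cscale_sum_right: "c *\<^sub>C (\<Sum>i\<in>S. f i) = (\<Sum>i\<in>S. c *\<^sub>C f i)"
  by (induct S rule: infinite_finite_induct) (auto simp: cscale_add_right)
lemma cscale_sum_left: "(\<Sum>i\<in>S. f i) *\<^sub>C x = (\<Sum>i\<in>S. f i *\<^sub>C x)"
  by (induct S rule: infinite_finite_induct) (auto simp: cscale_add_left)
end

context cstar_algebra begin
lemma adj_zero[simp]: "adj 0 = 0"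
  using adj_add[of 0 0] by simp
lemma adj_minus: "adj (- x) = - adj x"
  proof -
  have "adj x + adj (- x) = 0" using adj_add[of x "-x"] by simp
  then show ?thesis by (rule minus_unique[symmetric])
qed
lemma adj_diff: "adj (x - y) = adj x - adj y"
  using adj_add[of x "-y"] by (simp add: adj_minus)
lemma adj_scaleR: "adj (r *\<^sub>R x) = r *\<^sub>R adj x"
  by (simp add: scaleR_cscale adj_cscale)
lemma adj_one[simp]: "adj 1 = 1"
proof -
  have "adj 1 = adj 1 * adj (adj 1)" by (simp add: adj_adj)
  also have "\<dots> = adj (adj 1 * 1)" by (rule adj_mult[symmetric])
  also have "\<dots> = 1" by (simp add: adj_adj)
  finally show ?thesis .
qed
lemma norm_adj_ge: "norm x \<le> norm (adj x)"
proof (cases "norm x = 0")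
  case False
  have "norm x * norm x = norm (adj x * x)" by (simp add: cstar_identity)
  also have "\<dots> \<le> norm (adj x) * norm x" by (rule norm_mult_ineq)
  finally show ?thesis using False by (simp add: mult_le_cancel_right)
qed simp
lemma norm_adj[simp]: "norm (adj x) = norm x"
  using norm_adj_ge[of x] norm_adj_ge[of "adj x"] by (simp add: adj_adj)
lemma adj_power: "adj h = h \<Longrightarrow> adj (h ^ m) = h ^ m"
proof (induct m)
  case (Suc m)
  then show ?case by (simp add: adj_mult power_commutes)
qed simp
end

lemma bounded_linear_adj: "bounded_linear (adj :: 'a::cstar_algebra \<Rightarrow> 'a)"
  by (rule bounded_linear_intro[where K=1]) (auto simp: adj_add adj_scaleR)

lemma gchoose_half_Suc:
  "((1/2::real) gchoose (Suc k)) = ((1/2::real) gchoose k) * ((1/2 - real k) / (real k + 1))"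
proof -
  have "fact (Suc k) * ((1/2::real) gchoose (Suc k)) = (\<Prod>i = 0..<Suc k. 1/2 - of_nat i)"
    by (rule gbinomial_mult_fact)
  also have "\<dots> = (\<Prod>i = 0..<k. 1/2 - of_nat i) * (1/2 - real k)"
    by simp
  also have "(\<Prod>i = 0..<k. 1/2 - of_nat i) = fact k * ((1/2::real) gchoose k)"
    by (rule gbinomial_mult_fact[symmetric])
  finally have "fact (Suc k) * ((1/2::real) gchoose (Suc k)) = fact k * ((1/2::real) gchoose k) * (1/2 - real k)" .
  moreover have "fact (Suc k) = (1 + real k) * (fact k :: real)" by simp
  ultimately have "(1 + real k) * ((1/2::real) gchoose (Suc k)) = ((1/2::real) gchoose k) * (1/2 - real k)"
    by (simp add: mult.assoc)
  then show ?thesis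
    by (simp add: field_simps)
qed

lemma gchoose_half_bound: "\<bar>(1/2::real) gchoose k\<bar> \<le> 1"
proof (induct k)
  case (Suc k)
  have "\<bar>(1/2 - real k) / (real k + 1)\<bar> \<le> 1" by (simp add: abs_le_iff divide_le_eq)
  then have "\<bar>(1/2::real) gchoose (Suc k)\<bar> \<le> 1 * 1"
    unfolding gchoose_half_Suc abs_mult using Suc by (intro mult_mono) auto
  then show ?case by simp
qed simp

lemma one_gchoose: "((1::real) gchoose k) = (if k = 0 \<or> k = 1 then 1 else 0)"
proof (cases k)
  case (Suc j)
  have "((0 + 1::real) gchoose Suc j) = (0 gchoose j) + (0 gchoose Suc j)"
    by (rule gbinomial_Suc_Suc)
  then show ?thesis using Suc by (simp add: gbinomial_0_left)
qed simp

lemma sqrt_exists: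
  fixes h :: "'a::cstar_algebra"
  assumes sa: "adj h = h" and nh: "norm h < 1"
  shows "\<exists>s. 1 + h = adj s * s"
proof -
  define c where "c m = (1/2::real) gchoose m" for m
  define f where "f m = c m *\<^sub>R h ^ m" for m
  have nf: "norm (f m) \<le> norm h ^ m" for m
  proof -
    have "norm (f m) = \<bar>c m\<bar> * norm (h ^ m)" by (simp add: f_def)
    also have "\<dots> \<le> 1 * norm h ^ m"
      using gchoose_half_bound[of m] by (intro mult_mono) (auto simp: c_def norm_power_ineq)
    finally show ?thesis by simp
  qed
  have sf: "summable (\<lambda>m. norm (f m))"
    by (rule summable_comparison_test[OF _ summable_geometric[of "norm h"]])
       (use nf nh in auto)
  define s where "s = (\<Sum>m. f m)"
  have adjs: "adj s = s"
  proof -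
    have "adj s = (\<Sum>m. adj (f m))"
      unfolding s_def by (rule bounded_linear.suminf[OF bounded_linear_adj summable_norm_cancel[OF sf]])
    also have "(\<lambda>m. adj (f m)) = f" by (auto simp: f_def adj_scaleR adj_power sa)
    finally show ?thesis by (simp add: s_def)
  qed
  have "s * s = (\<Sum>k. \<Sum>i\<le>k. f i * f (k - i))"
    unfolding s_def by (rule Cauchy_product[OF sf sf])
  also have "(\<lambda>k. \<Sum>i\<le>k. f i * f (k - i)) = (\<lambda>k. ((1::real) gchoose k) *\<^sub>R h ^ k)"
  proof
    fix k
    have "(\<Sum>i\<le>k. f i * f (k - i)) = (\<Sum>i\<le>k. (c i * c (k - i)) *\<^sub>R h ^ k)"
      by (intro sum.cong refl) (auto simp: f_def power_add[symmetric])
    also have "\<dots> = (\<Sum>i\<le>k. c i * c (k - i)) *\<^sub>R h ^ k"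
      by (simp add: scaleR_sum_left)
    also have "(\<Sum>i\<le>k. c i * c (k - i)) = ((1::real) gchoose k)"
      using gbinomial_Vandermonde[of "1/2::real" "1/2" k] by (simp add: c_def atLeast0AtMost)
    finally show "(\<Sum>i\<le>k. f i * f (k - i)) = ((1::real) gchoose k) *\<^sub>R h ^ k" .
  qed
  also have "(\<Sum>k. ((1::real) gchoose k) *\<^sub>R h ^ k) = (\<Sum>k\<in>{0,1}. ((1::real) gchoose k) *\<^sub>R h ^ k)"
    by (rule sums_unique[symmetric], rule sums_finite) (auto simp: one_gchoose)
  also have "\<dots> = 1 + h" by (simp add: one_gchoose)
  finally show ?thesis using adjs by metis
qed

context complex_inner begin
lemma cinner_zero_left[simp]: "cinner 0 y = 0"
  using cinner_add_left[of 0 0 y] by simp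
lemma cinner_zero_right[simp]: "cinner x 0 = 0"
  using cinner_commute[of 0 x] by simp
lemma cinner_add_right: "cinner x (y + z) = cinner x y + cinner x z"
  using cinner_add_left[of y z x] cinner_commute by (metis complex_cnj_add)
lemma cinner_cscale_right: "cinner x (c *\<^sub>C y) = cnj c * cinner x y"
  using cinner_cscale_left[of c y x] cinner_commute by (metis complex_cnj_mult)
lemma cinner_minus_left: "cinner (- x) y = - cinner x y"
  proof -
  have e: "cinner x y + cinner (- x) y = 0" using cinner_add_left[of x "-x" y] by simp
  have "cinner (- x) y = (cinner x y + cinner (- x) y) - cinner x y" by simp
  also have "\<dots> = - cinner x y" unfolding e by simp
  finally show ?thesis .
qed
lemma cinner_diff_left: "cinner (x - y) z = cinner x z - cinner y z"
  using cinner_add_left[of x "-y" z] by (simp add: cinner_minus_left)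
lemma cinner_sum_left: "cinner (\<Sum>i\<in>S. f i) z = (\<Sum>i\<in>S. cinner (f i) z)"
  by (induct S rule: infinite_finite_induct) (auto simp: cinner_add_left)
lemma cinner_sum_right: "cinner z (\<Sum>i\<in>S. f i) = (\<Sum>i\<in>S. cinner z (f i))"
  by (induct S rule: infinite_finite_induct) (auto simp: cinner_add_right)
end

lemma cnonneg_add: "cnonneg a \<Longrightarrow> cnonneg b \<Longrightarrow> cnonneg (a + b)"
  by (auto simp: cnonneg_def)
lemma cnonneg_sum: "(\<And>i. i \<in> S \<Longrightarrow> cnonneg (f i)) \<Longrightarrow> cnonneg (\<Sum>i\<in>S. f i)"
  by (induct S rule: infinite_finite_induct) (auto simp: cnonneg_def)
lemma cnonneg_0[simp]: "cnonneg 0" by (simp add: cnonneg_def)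

locale posmap =
  fixes \<psi> :: "'a::cstar_algebra \<Rightarrow> 'h::complex_inner \<Rightarrow> 'h"
  assumes pm: "positive_map \<psi>"
begin

lemma add: "\<psi> (a + b) h = \<psi> a h + \<psi> b h"
  using pm unfolding positive_map_def by metis
lemma scale: "\<psi> (c *\<^sub>C a) h = c *\<^sub>C \<psi> a h"
  using pm unfolding positive_map_def by metis
lemma zero[simp]: "\<psi> 0 h = 0"
  using add[of 0 0 h] by simp
lemma minus: "\<psi> (- a) h = - \<psi> a h"
  using scale[of "-1" a h] by (simp add: cscale_minus_left cscale_one)
lemma diff: "\<psi> (a - b) h = \<psi> a h - \<psi> b h"
  using add[of a "-b" h] by (simp add: minus)
lemma sum: "\<psi> (\<Sum>i\<in>S. f i) h = (\<Sum>i\<in>S. \<psi> (f i) h)"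
  by (induct S rule: infinite_finite_induct) (auto simp: add)
lemma lin_add: "\<psi> a (x + y) = \<psi> a x + \<psi> a y"
  using pm unfolding positive_map_def bounded_clinear_op_def by metis
lemma lin_scale: "\<psi> a (c *\<^sub>C x) = c *\<^sub>C \<psi> a x"
  using pm unfolding positive_map_def bounded_clinear_op_def by metis
lemma pos: "cnonneg (cinner (\<psi> (adj s * s) w) w)"
  using pm unfolding positive_map_def op_pos_def cstar_pos_def by blast

lemma selfadj_bound:
  assumes sa: "adj h = h" and nh: "norm h < 1"
  shows "cmod (cinner (\<psi> h w) w) \<le> Re (cinner (\<psi> 1 w) w)"
proof -
  obtain s where s: "1 + h = adj s * s" using sqrt_exists[OF sa nh] by blast
  have sa': "adj (- h) = - h" using sa by (simp add: adj_minus)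
  obtain t where t: "1 + - h = adj t * t" using sqrt_exists[OF sa'] nh by auto
  have p1: "cnonneg (cinner (\<psi> 1 w) w + cinner (\<psi> h w) w)"
    using pos[of s w] unfolding s[symmetric] by (simp add: add cinner_add_left)
  have p2: "cnonneg (cinner (\<psi> 1 w) w - cinner (\<psi> h w) w)"
    using pos[of t w] unfolding t[symmetric] by (simp add: add minus diff cinner_add_left cinner_minus_left cinner_diff_left)
  from p1 p2 have "Im (cinner (\<psi> h w) w) = 0"
    "\<bar>Re (cinner (\<psi> h w) w)\<bar> \<le> Re (cinner (\<psi> 1 w) w)"
    by (auto simp: cnonneg_def)
  then show ?thesis by (simp add: cmod_def)
qed

lemma half_bound:
  assumes nb: "norm b < 1"
  shows "cmod (cinner (\<psi> b w) w) \<le> 2 * Re (cinner (\<psi> 1 w) w)"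
proof -
  define h where "h = (1/2) *\<^sub>C (b + adj b)"
  define k where "k = (- (\<i>/2)) *\<^sub>C (b - adj b)"
  have bhk: "b = h + \<i> *\<^sub>C k"
  proof -
    have "\<i> *\<^sub>C k = (1/2) *\<^sub>C (b - adj b)"
      by (simp add: k_def cscale_cscale)
    then have "h + \<i> *\<^sub>C k = (1/2) *\<^sub>C (b + adj b) + (1/2) *\<^sub>C (b - adj b)"
      by (simp only: h_def)
    also have "\<dots> = (1/2) *\<^sub>C ((b + adj b) + (b - adj b))"
      by (rule cscale_add_right[symmetric])
    also have "(b + adj b) + (b - adj b) = b + b" by simp
    also have "(1/2) *\<^sub>C (b + b) = (1/2) *\<^sub>C b + (1/2) *\<^sub>C b"
      by (rule cscale_add_right)
    also have "\<dots> = (1/2 + 1/2) *\<^sub>C b"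
      by (rule cscale_add_left[symmetric])
    finally show ?thesis by (simp add: cscale_one)
  qed
  have nh: "norm h < 1"
  proof -
    have "norm h = 1/2 * norm (b + adj b)" by (simp add: h_def norm_cscale)
    also have "\<dots> \<le> 1/2 * (norm b + norm (adj b))" using norm_triangle_ineq[of b "adj b"] by simp
    finally show ?thesis using nb by simp
  qed
  have nk: "norm k < 1"
  proof -
    have "norm k = 1/2 * norm (b - adj b)" by (simp add: k_def norm_cscale norm_divide)
    also have "\<dots> \<le> 1/2 * (norm b + norm (adj b))" using norm_triangle_ineq4[of b "adj b"] by simp
    finally show ?thesis using nb by simp
  qed
  have sah: "adj h = h" by (simp add: h_def adj_cscale adj_add adj_adj add.commute)
  have sak: "adj k = k"
  proof -
    have "adj k = (\<i>/2) *\<^sub>C (adj b - b)" by (simp add: k_def adj_cscale adj_diff adj_adj)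
    also have "adj b - b = - (b - adj b)" by simp
    also have "(\<i>/2) *\<^sub>C (- (b - adj b)) = - ((\<i>/2) *\<^sub>C (b - adj b))" by (rule cscale_minus_right)
    also have "\<dots> = (- (\<i>/2)) *\<^sub>C (b - adj b)" by (rule cscale_minus_left[symmetric])
    finally show ?thesis by (simp only: k_def)
  qed
  have "cinner (\<psi> b w) w = cinner (\<psi> h w) w + \<i> * cinner (\<psi> k w) w"
    unfolding bhk by (simp add: add scale cinner_add_left cinner_cscale_left)
  then have "cmod (cinner (\<psi> b w) w) \<le> cmod (cinner (\<psi> h w) w) + cmod (cinner (\<psi> k w) w)"
    by (metis norm_triangle_ineq norm_mult norm_ii mult_1)
  also have "\<dots> \<le> Re (cinner (\<psi> 1 w) w) + Re (cinner (\<psi> 1 w) w)"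
    by (intro add_mono selfadj_bound sah sak nh nk)
  finally show ?thesis by simp
qed

lemma diag_bound: "cmod (cinner (\<psi> b w) w) \<le> 4 * Re (cinner (\<psi> 1 w) w) * norm b"
proof (cases "b = 0")
  case False
  define t where "t = 1 / (2 * norm b)"
  have t: "t > 0" using False by (simp add: t_def)
  have "norm (complex_of_real t *\<^sub>C b) = \<bar>t\<bar> * norm b" by (simp add: norm_cscale)
  also have "\<dots> = 1/2" using False t by (simp add: t_def)
  finally have "norm (complex_of_real t *\<^sub>C b) = 1/2" .
  then have "cmod (cinner (\<psi> (complex_of_real t *\<^sub>C b) w) w) \<le> 2 * Re (cinner (\<psi> 1 w) w)"
    by (intro half_bound) simp
  also have "cinner (\<psi> (complex_of_real t *\<^sub>C b) w) w = complex_of_real t * cinner (\<psi> b w) w"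
    by (simp add: scale cinner_cscale_left)
  finally have "t * cmod (cinner (\<psi> b w) w) \<le> 2 * Re (cinner (\<psi> 1 w) w)"
    using t by (simp add: norm_mult)
  then show ?thesis using False t by (simp add: t_def field_simps)
qed simp

lemma expand:
  "cinner (\<psi> b (y + c *\<^sub>C z)) (y + c *\<^sub>C z) =
     cinner (\<psi> b y) y + cnj c * cinner (\<psi> b y) z + c * cinner (\<psi> b z) y + c * cnj c * cinner (\<psi> b z) z"
  by (simp add: lin_add lin_scale cinner_add_left cinner_add_right cinner_cscale_left cinner_cscale_right
      algebra_simps)

lemma polar:
  "4 * cinner (\<psi> b y) z =
     cinner (\<psi> b (y + 1 *\<^sub>C z)) (y + 1 *\<^sub>C z) + \<i> * cinner (\<psi> b (y + \<i> *\<^sub>C z)) (y + \<i> *\<^sub>C z)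
     - cinner (\<psi> b (y + (-1) *\<^sub>C z)) (y + (-1) *\<^sub>C z) - \<i> * cinner (\<psi> b (y + (-\<i>) *\<^sub>C z)) (y + (-\<i>) *\<^sub>C z)"
  unfolding expand by (simp add: algebra_simps)

lemma cont: "\<exists>C. \<forall>b. cmod (cinner (\<psi> b y) z) \<le> C * norm b"
proof -
  define q where "q c = Re (cinner (\<psi> 1 (y + c *\<^sub>C z)) (y + c *\<^sub>C z))" for c
  show ?thesis
  proof (intro exI allI)
    fix b
    have "4 * cmod (cinner (\<psi> b y) z) = cmod (4 * cinner (\<psi> b y) z)" by (simp add: norm_mult)
    also have "\<dots> \<le> cmod (cinner (\<psi> b (y + 1 *\<^sub>C z)) (y + 1 *\<^sub>C z)) + cmod (cinner (\<psi> b (y + \<i> *\<^sub>C z)) (y + \<i> *\<^sub>C z))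
     + cmod (cinner (\<psi> b (y + (-1) *\<^sub>C z)) (y + (-1) *\<^sub>C z)) + cmod (cinner (\<psi> b (y + (-\<i>) *\<^sub>C z)) (y + (-\<i>) *\<^sub>C z))"
      unfolding polar
      by (rule order_trans[OF norm_triangle_ineq4] add_mono order_trans[OF norm_triangle_ineq4]
             order_trans[OF norm_triangle_ineq] order_refl | simp add: norm_mult)+
    also have "\<dots> \<le> 4 * q 1 * norm b + 4 * q \<i> * norm b + 4 * q (-1) * norm b + 4 * q (-\<i>) * norm b"
      unfolding q_def by (intro add_mono diag_bound)
    finally show "cmod (cinner (\<psi> b y) z) \<le> (q 1 + q \<i> + q (-1) + q (-\<i>)) * norm b"
      by (simp add: algebra_simps)
  qed
qed

end

definition psd :: "'i set \<Rightarrow> ('i \<Rightarrow> 'i \<Rightarrow> complex) \<Rightarrow> bool" where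
  "psd S K \<longleftrightarrow> (\<forall>v. cnonneg (\<Sum>x\<in>S. \<Sum>y\<in>S. cnj (v x) * K x y * v y))"

definition form :: "'i set \<Rightarrow> ('i \<Rightarrow> 'i \<Rightarrow> complex) \<Rightarrow> ('i \<Rightarrow> complex) \<Rightarrow> ('i \<Rightarrow> complex) \<Rightarrow> complex" where
  "form S K u v = (\<Sum>x\<in>S. \<Sum>y\<in>S. cnj (u x) * K x y * v y)"

lemma psd_form: "psd S K \<longleftrightarrow> (\<forall>v. cnonneg (form S K v v))"
  by (simp add: psd_def form_def)

lemma form_add_left: "form S K (\<lambda>x. u x + w x) v = form S K u v + form S K w v"
  by (simp add: form_def algebra_simps sum.distrib)
lemma form_add_right: "form S K u (\<lambda>x. v x + w x) = form S K u v + form S K u w"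
  by (simp add: form_def algebra_simps sum.distrib)
lemma form_scale_left: "form S K (\<lambda>x. c * u x) v = cnj c * form S K u v"
  by (simp add: form_def algebra_simps sum_distrib_left)
lemma form_scale_right: "form S K u (\<lambda>x. c * v x) = c * form S K u v"
  by (simp add: form_def algebra_simps sum_distrib_left)

definition dlt :: "'i \<Rightarrow> 'i \<Rightarrow> complex" where "dlt a x = (if x = a then 1 else 0)"

lemma form_dlt_left: "finite S \<Longrightarrow> a \<in> S \<Longrightarrow> form S K (dlt a) v = (\<Sum>y\<in>S. K a y * v y)"
proof -
  assume "finite S" "a \<in> S"
  have "form S K (dlt a) v = (\<Sum>x\<in>S. if x = a then (\<Sum>y\<in>S. K x y * v y) else 0)"
    unfolding form_def by (intro sum.cong refl) (auto simp: dlt_def)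
  then show ?thesis using \<open>finite S\<close> \<open>a \<in> S\<close> by simp
qed
lemma form_dlt_right: "finite S \<Longrightarrow> b \<in> S \<Longrightarrow> form S K u (dlt b) = (\<Sum>x\<in>S. cnj (u x) * K x b)"
proof -
  assume "finite S" "b \<in> S"
  have "form S K u (dlt b) = (\<Sum>x\<in>S. \<Sum>y\<in>S. if y = b then cnj (u x) * K x y else 0)"
    unfolding form_def by (intro sum.cong refl) (auto simp: dlt_def)
  then show ?thesis using \<open>finite S\<close> \<open>b \<in> S\<close> by simp
qed
lemma form_dlt: "finite S \<Longrightarrow> a \<in> S \<Longrightarrow> b \<in> S \<Longrightarrow> form S K (dlt a) (dlt b) = K a b"
proof -
  assume "finite S" "a \<in> S" "b \<in> S"
  then have "form S K (dlt a) (dlt b) = (\<Sum>y\<in>S. if y = b then K a y else 0)"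
    by (simp add: form_dlt_left dlt_def if_distrib cong: if_cong)
  then show ?thesis using \<open>finite S\<close> \<open>b \<in> S\<close> by simp
qed

lemma form_two:
  assumes "finite S" "a \<in> S" "b \<in> S"
  shows "form S K (\<lambda>x. c * dlt a x + d * dlt b x) (\<lambda>x. c * dlt a x + d * dlt b x)
       = cnj c * c * K a a + cnj c * d * K a b + cnj d * c * K b a + cnj d * d * K b b"
  using assms
  by (simp add: form_add_left form_add_right form_scale_left form_scale_right form_dlt algebra_simps)

lemma psd_two:
  assumes "psd S K" "finite S" "a \<in> S" "b \<in> S"
  shows "cnonneg (cnj c * c * K a a + cnj c * d * K a b + cnj d * c * K b a + cnj d * d * K b b)"
  using assms(1) form_two[OF assms(2-4), of K c d] unfolding psd_form by metis

lemma psd_diag: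
  assumes "psd S K" "finite S" "a \<in> S"
  shows "cnonneg (K a a)"
  using psd_two[OF assms assms(3), of 1 0] by simp

lemma psd_herm:
  assumes "psd S K" "finite S" "a \<in> S" "b \<in> S"
  shows "K b a = cnj (K a b)"
proof -
  have 1: "Im (K a a) = 0" "Im (K b b) = 0" using psd_diag[OF assms(1,2)] assms(3,4) by (auto simp: cnonneg_def)
  have 2: "Im (K a a + K a b + K b a + K b b) = 0"
    using psd_two[OF assms, of 1 1] by (simp add: cnonneg_def)
  have 3: "Im (K a a + \<i> * K a b - \<i> * K b a + K b b) = 0"
    using psd_two[OF assms, of 1 \<i>] by (simp add: cnonneg_def)
  from 1 2 3 show ?thesis by (simp add: complex_eq_iff)
qed

lemma psd_zero_row:
  assumes psd: "psd S K" and fin: "finite S" and a: "a \<in> S" and b: "b \<in> S" and z: "K a a = 0"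
  shows "K a b = 0"
proof (rule ccontr)
  assume nz: "K a b \<noteq> 0"
  define r where "r = (Re (K a b))\<^sup>2 + (Im (K a b))\<^sup>2"
  have r: "r > 0" using nz unfolding r_def by (simp add: sum_power2_gt_zero_iff complex_eq_iff)
  define t where "t = (Re (K b b) + 1) / (2 * r)"
  define c where "c = - (complex_of_real t * K a b)"
  have h: "K b a = cnj (K a b)" by (rule psd_herm[OF psd fin a b])
  have "cnonneg (cnj c * c * K a a + cnj c * 1 * K a b + cnj 1 * c * K b a + cnj 1 * 1 * K b b)"
    by (rule psd_two[OF psd fin a b])
  then have "0 \<le> Re (cnj c * K a b + c * cnj (K a b) + K b b)" using z h by (simp add: cnonneg_def)
  also have "Re (cnj c * K a b + c * cnj (K a b) + K b b) = - 2 * t * r + Re (K b b)"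
    by (simp add: c_def r_def algebra_simps power2_eq_square)
  also have "\<dots> = -1" using r by (simp add: t_def field_simps)
  finally show False by simp
qed

lemma psd_zero_col:
  assumes psd: "psd S K" and fin: "finite S" and a: "a \<in> S" and b: "b \<in> S" and z: "K a a = 0"
  shows "K b a = 0"
  using psd_zero_row[OF assms] psd_herm[OF psd fin a b] by simp

lemma psd_add: "psd S K1 \<Longrightarrow> psd S K2 \<Longrightarrow> psd S (\<lambda>x y. K1 x y + K2 x y)"
  unfolding psd_def by (simp add: algebra_simps sum.distrib cnonneg_add)

lemma psd_rank1:
  assumes "r \<ge> 0"
  shows "psd S (\<lambda>x y. complex_of_real r * g x * cnj (g y))"
proof -
  have "(\<Sum>x\<in>S. \<Sum>y\<in>S. cnj (v x) * (complex_of_real r * g x * cnj (g y)) * v y)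
      = complex_of_real r * ((\<Sum>x\<in>S. cnj (v x) * g x) * (\<Sum>y\<in>S. cnj (g y) * v y))" for v
    unfolding sum_product by (simp only: sum_distrib_left)
       (rule sum.cong[OF refl], rule sum.cong[OF refl], simp add: algebra_simps)
  moreover have "(\<Sum>x\<in>S. cnj (v x) * g x) = cnj (\<Sum>y\<in>S. cnj (g y) * v y)" for v
    by (simp add: mult.commute)
  moreover have "cnonneg (complex_of_real r * (cnj z * z))" for z
    using assms by (simp add: cnonneg_def)
  ultimately show ?thesis unfolding psd_def by (metis (no_types, lifting))
qed

lemma psd_cong: "(\<And>x y. x \<in> S \<Longrightarrow> y \<in> S \<Longrightarrow> K x y = K' x y) \<Longrightarrow> psd S K \<longleftrightarrow> psd S K'"
  unfolding psd_def by (simp cong: sum.cong)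

lemma sum_restrict_sub:
  assumes "finite S" "T \<subseteq> S"
  shows "(\<Sum>x\<in>S. if x \<in> T then f x else 0) = (\<Sum>x\<in>T. f x)"
proof -
  have "(\<Sum>x\<in>S. if x \<in> T then f x else 0) = (\<Sum>x\<in>S \<inter> T. f x)"
    using assms(1) by (simp add: sum.inter_restrict)
  also have "S \<inter> T = T" using assms(2) by blast
  finally show ?thesis .
qed

lemma psd_ext0:
  assumes fin: "finite S" and sub: "A \<subseteq> S" and p: "psd A K"
  shows "psd S (\<lambda>x y. if x \<in> A \<and> y \<in> A then K x y else 0)"
  unfolding psd_def
proof
  fix v
  have "(\<Sum>x\<in>S. \<Sum>y\<in>S. cnj (v x) * (if x \<in> A \<and> y \<in> A then K x y else 0) * v y)
      = (\<Sum>x\<in>S. if x \<in> A then (\<Sum>y\<in>S. if y \<in> A then cnj (v x) * K x y * v y else 0) else 0)"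
    by (auto intro!: sum.cong)
  also have "\<dots> = (\<Sum>x\<in>A. \<Sum>y\<in>A. cnj (v x) * K x y * v y)"
    by (simp add: sum_restrict_sub[OF fin sub])
  finally show "cnonneg (\<Sum>x\<in>S. \<Sum>y\<in>S. cnj (v x) * (if x \<in> A \<and> y \<in> A then K x y else 0) * v y)"
    using p unfolding psd_def by simp
qed

lemma psd_mono:
  assumes fin: "finite S" and sub: "T \<subseteq> S" and p: "psd S K"
  shows "psd T K"
  unfolding psd_def
proof
  fix v
  define w :: "_ \<Rightarrow> complex" where "w x = (if x \<in> T then v x else 0)" for x
  have "(\<Sum>x\<in>S. \<Sum>y\<in>S. cnj (w x) * K x y * w y)
      = (\<Sum>x\<in>S. if x \<in> T then (\<Sum>y\<in>S. if y \<in> T then cnj (v x) * K x y * v y else 0) else 0)"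
    by (auto intro!: sum.cong simp: w_def)
  also have "\<dots> = (\<Sum>x\<in>T. \<Sum>y\<in>T. cnj (v x) * K x y * v y)"
    by (simp add: sum_restrict_sub[OF fin sub])
  moreover have "cnonneg (\<Sum>x\<in>S. \<Sum>y\<in>S. cnj (w x) * K x y * w y)"
    using p unfolding psd_def by simp
  ultimately show "cnonneg (\<Sum>x\<in>T. \<Sum>y\<in>T. cnj (v x) * K x y * v y)"
    by simp
qed

lemma psd_reindex:
  assumes inj: "inj_on f S" and p: "psd S (\<lambda>x y. K (f x) (f y))"
  shows "psd (f ` S) K"
  unfolding psd_def
proof
  fix v
  have "(\<Sum>x\<in>f ` S. \<Sum>y\<in>f ` S. cnj (v x) * K x y * v y)
     = (\<Sum>x\<in>S. \<Sum>y\<in>S. cnj (v (f x)) * K (f x) (f y) * v (f y))"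
    by (simp add: sum.reindex[OF inj])
  moreover have "cnonneg (\<Sum>x\<in>S. \<Sum>y\<in>S. cnj (v (f x)) * K (f x) (f y) * v (f y))"
    using p unfolding psd_def by simp
  ultimately show "cnonneg (\<Sum>x\<in>f ` S. \<Sum>y\<in>f ` S. cnj (v x) * K x y * v y)"
    by simp
qed

lemma psd_schur:
  assumes psd: "psd S K" and fin: "finite S" and c: "c \<in> S" and nz: "K c c \<noteq> 0"
  shows "psd S (\<lambda>x y. K x y - K x c * K c y / K c c)"
  unfolding psd_form
proof
  fix v
  obtain r where r: "K c c = complex_of_real r" "r > 0"
    using psd_diag[OF psd fin c] nz by (auto simp: cnonneg_def complex_eq_iff intro!: exI[of _ "Re (K c c)"])
  define s where "s = form S K (dlt c) v"
  have s1: "s = (\<Sum>y\<in>S. K c y * v y)" by (simp add: s_def form_dlt_left[OF fin c])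
  have s2: "form S K v (dlt c) = cnj s"
  proof -
    have "form S K v (dlt c) = (\<Sum>x\<in>S. cnj (v x) * cnj (K c x))"
      using psd_herm[OF psd fin c] by (simp add: form_dlt_right[OF fin c])
    also have "\<dots> = cnj s" by (simp add: s1 mult.commute)
    finally show ?thesis .
  qed
  define t where "t = - s / K c c"
  define w where "w x = v x + t * dlt c x" for x
  have "form S K w w = form S K v v + t * form S K v (dlt c) + cnj t * form S K (dlt c) v
      + cnj t * t * form S K (dlt c) (dlt c)"
    unfolding w_def by (simp add: form_add_left form_add_right form_scale_left form_scale_right algebra_simps)
  also have "\<dots> = form S K v v - cnj s * s / K c c"
    unfolding s2 form_dlt[OF fin c c] s_def[symmetric] t_def using r
    by (simp add: field_simps)
  also have "form S K v v - cnj s * s / K c c = form S (\<lambda>x y. K x y - K x c * K c y / K c c) v v"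
  proof -
    have "form S (\<lambda>x y. K x c * K c y / K c c) v v
        = (\<Sum>x\<in>S. cnj (v x) * K x c) * (\<Sum>y\<in>S. K c y * v y) / K c c"
      unfolding form_def by (simp only: sum_product sum_divide_distrib)
         (rule sum.cong[OF refl], rule sum.cong[OF refl], simp add: algebra_simps)
    then have "form S (\<lambda>x y. K x c * K c y / K c c) v v = form S K v (dlt c) * s / K c c"
      by (simp only: form_dlt_right[OF fin c] s1)
    then show ?thesis
      unfolding s2 by (simp add: form_def sum_subtractf algebra_simps)
  qed
  finally show "cnonneg (form S (\<lambda>x y. K x y - K x c * K c y / K c c) v v)"
    using psd unfolding psd_form by metis
qed

lemma completion:
  assumes "finite C"
  shows "\<And>A E K1 K2. finite A \<Longrightarrow> finite E \<Longrightarrow> A \<inter> C = {} \<Longrightarrow> C \<inter> E = {} \<Longrightarrow> A \<inter> E = {} \<Longrightarrow>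
     psd (A \<union> C) K1 \<Longrightarrow> psd (C \<union> E) K2 \<Longrightarrow> (\<forall>x\<in>C. \<forall>y\<in>C. K1 x y = K2 x y) \<Longrightarrow>
     \<exists>K. psd (A \<union> C \<union> E) K \<and> (\<forall>x\<in>A \<union> C. \<forall>y\<in>A \<union> C. K x y = K1 x y)
        \<and> (\<forall>x\<in>C \<union> E. \<forall>y\<in>C \<union> E. K x y = K2 x y)"
  using assms
proof (induct C rule: finite_induct)
  case empty
  fix A E K1 K2
  assume fA: "finite A" and fE: "finite E" and AE: "A \<inter> E = {}"
    and p1: "psd (A \<union> {}) K1" and p2: "psd ({} \<union> E) K2"
  define K where "K x y = (if x \<in> A \<and> y \<in> A then K1 x y else 0) + (if x \<in> E \<and> y \<in> E then K2 x y else 0)" for x y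
  have "psd (A \<union> E) K"
    unfolding K_def
    by (rule psd_add; rule psd_ext0) (use fA fE p1 p2 in auto)
  moreover have "\<forall>x\<in>A \<union> {}. \<forall>y\<in>A \<union> {}. K x y = K1 x y" using AE by (auto simp: K_def)
  moreover have "\<forall>x\<in>{} \<union> E. \<forall>y\<in>{} \<union> E. K x y = K2 x y" using AE by (auto simp: K_def)
  ultimately show "\<exists>K. psd (A \<union> {} \<union> E) K \<and> (\<forall>x\<in>A \<union> {}. \<forall>y\<in>A \<union> {}. K x y = K1 x y)
        \<and> (\<forall>x\<in>{} \<union> E. \<forall>y\<in>{} \<union> E. K x y = K2 x y)" by auto
next
  case (insert c C)
  fix A E K1 K2
  assume fA: "finite A" and fE: "finite E" and AC: "A \<inter> insert c C = {}" and CE: "insert c C \<inter> E = {}"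
    and AE: "A \<inter> E = {}"
    and p1: "psd (A \<union> insert c C) K1" and p2: "psd (insert c C \<union> E) K2"
    and agr: "\<forall>x\<in>insert c C. \<forall>y\<in>insert c C. K1 x y = K2 x y"
  define S1 where "S1 = A \<union> insert c C"
  define S2 where "S2 = insert c C \<union> E"
  have fS1: "finite S1" and fS2: "finite S2" using fA fE insert(1) by (auto simp: S1_def S2_def)
  have cS1: "c \<in> S1" and cS2: "c \<in> S2" by (auto simp: S1_def S2_def)
  have eqS1: "insert c A \<union> C = S1" by (auto simp: S1_def)
  have eqall: "insert c A \<union> C \<union> E = A \<union> insert c C \<union> E" by auto
  have fA': "finite (insert c A)" using fA by simp
  have d1: "insert c A \<inter> C = {}" using AC insert(2) by auto
  have d2: "C \<inter> E = {}" using CE by auto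
  have d3: "insert c A \<inter> E = {}" using AE CE by auto
  have CEsub: "C \<union> E \<subseteq> S2" by (auto simp: S2_def)
  have kc: "K1 c c = K2 c c" using agr by auto
  show "\<exists>K. psd (A \<union> insert c C \<union> E) K \<and> (\<forall>x\<in>A \<union> insert c C. \<forall>y\<in>A \<union> insert c C. K x y = K1 x y)
        \<and> (\<forall>x\<in>insert c C \<union> E. \<forall>y\<in>insert c C \<union> E. K x y = K2 x y)"
  proof (cases "K1 c c = 0")
    case True
    have q1: "psd (insert c A \<union> C) K1" using p1 eqS1 by (simp add: S1_def)
    have q2: "psd (C \<union> E) K2" using psd_mono[OF fS2 CEsub] p2 by (simp add: S2_def)
    have q3: "\<forall>x\<in>C. \<forall>y\<in>C. K1 x y = K2 x y" using agr by auto
    obtain K where K: "psd (insert c A \<union> C \<union> E) K"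
      and K1: "\<forall>x\<in>insert c A \<union> C. \<forall>y\<in>insert c A \<union> C. K x y = K1 x y"
      and K2: "\<forall>x\<in>C \<union> E. \<forall>y\<in>C \<union> E. K x y = K2 x y"
      using insert(3)[OF fA' fE d1 d2 d3 q1 q2 q3] by blast
    have fall: "finite (insert c A \<union> C \<union> E)" using fA fE insert(1) by auto
    have call: "c \<in> insert c A \<union> C \<union> E" by auto
    have Kcc: "K c c = 0" using K1 True by auto
    have K2cc: "K2 c c = 0" using True kc by simp
    have "\<forall>x\<in>S2. \<forall>y\<in>S2. K x y = K2 x y"
    proof (intro ballI)
      fix x y assume x: "x \<in> S2" and y: "y \<in> S2"
      have xa: "x \<in> insert c A \<union> C \<union> E" "y \<in> insert c A \<union> C \<union> E" using x y by (auto simp: S2_def)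
      show "K x y = K2 x y"
      proof (cases "x = c \<or> y = c")
        case True
        then show ?thesis
          using psd_zero_row[OF K fall call xa(2) Kcc] psd_zero_col[OF K fall call xa(1) Kcc]
            psd_zero_row[OF p2[folded S2_def] fS2 cS2 y K2cc] psd_zero_col[OF p2[folded S2_def] fS2 cS2 x K2cc]
          by auto
      next
        case False
        then show ?thesis using K2 x y by (auto simp: S2_def)
      qed
    qed
    then show ?thesis using K K1 eqall eqS1 by (auto simp: S1_def S2_def)
  next
    case False
    obtain r where r: "K1 c c = complex_of_real r" "r > 0"
      using psd_diag[OF p1[folded S1_def] fS1 cS1] False
      by (auto simp: cnonneg_def complex_eq_iff intro!: exI[of _ "Re (K1 c c)"])
    define K1' where "K1' x y = K1 x y - K1 x c * K1 c y / K1 c c" for x y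
    define K2' where "K2' x y = K2 x y - K2 x c * K2 c y / K2 c c" for x y
    have s1: "psd S1 K1'" unfolding K1'_def by (rule psd_schur[OF p1[folded S1_def] fS1 cS1 False])
    have s2: "psd S2 K2'" unfolding K2'_def by (rule psd_schur[OF p2[folded S2_def] fS2 cS2]) (use False kc in simp)
    have q1: "psd (insert c A \<union> C) K1'" using s1 eqS1 by simp
    have q2: "psd (C \<union> E) K2'" using psd_mono[OF fS2 CEsub s2] .
    have q3: "\<forall>x\<in>C. \<forall>y\<in>C. K1' x y = K2' x y"
    proof (intro ballI)
      fix x y assume "x \<in> C" "y \<in> C"
      then have "K1 x y = K2 x y" "K1 x c = K2 x c" "K1 c y = K2 c y" using agr by auto
      then show "K1' x y = K2' x y" using kc by (simp add: K1'_def K2'_def)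
    qed
    obtain K' where K: "psd (insert c A \<union> C \<union> E) K'"
      and K1: "\<forall>x\<in>insert c A \<union> C. \<forall>y\<in>insert c A \<union> C. K' x y = K1' x y"
      and K2: "\<forall>x\<in>C \<union> E. \<forall>y\<in>C \<union> E. K' x y = K2' x y"
      using insert(3)[OF fA' fE d1 d2 d3 q1 q2 q3] by blast
    have fall: "finite (insert c A \<union> C \<union> E)" using fA fE insert(1) by auto
    have call: "c \<in> insert c A \<union> C \<union> E" by auto
    have Kcc: "K' c c = 0" using K1 False by (auto simp: K1'_def)
    have K2cc: "K2' c y = 0" "K2' y c = 0" for y using False kc by (auto simp: K2'_def)
    have KK2: "\<forall>x\<in>S2. \<forall>y\<in>S2. K' x y = K2' x y"
    proof (intro ballI)
      fix x y assume x: "x \<in> S2" and y: "y \<in> S2"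
      have xa: "x \<in> insert c A \<union> C \<union> E" "y \<in> insert c A \<union> C \<union> E" using x y by (auto simp: S2_def)
      show "K' x y = K2' x y"
      proof (cases "x = c \<or> y = c")
        case True
        then show ?thesis
          using psd_zero_row[OF K fall call xa(2) Kcc] psd_zero_col[OF K fall call xa(1) Kcc] K2cc
          by auto
      next
        case False
        then show ?thesis using K2 x y by (auto simp: S2_def)
      qed
    qed
    define g where "g x = (if x \<in> S1 then K1 x c else K2 x c)" for x
    define K where "K x y = K' x y + complex_of_real (1 / r) * g x * cnj (g y)" for x y
    have "psd (insert c A \<union> C \<union> E) K"
      unfolding K_def by (rule psd_add[OF K psd_rank1]) (use r in simp)
    moreover have "\<forall>x\<in>S1. \<forall>y\<in>S1. K x y = K1 x y"
    proof (intro ballI)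
      fix x y assume x: "x \<in> S1" and y: "y \<in> S1"
      have h: "K1 c y = cnj (K1 y c)" by (rule psd_herm[OF p1[folded S1_def] fS1 y cS1])
      have "K' x y = K1' x y" using K1 x y eqS1 by auto
      then show "K x y = K1 x y" using x y r h by (simp add: K_def K1'_def g_def field_simps)
    qed
    moreover have "\<forall>x\<in>S2. \<forall>y\<in>S2. K x y = K2 x y"
    proof (intro ballI)
      fix x y assume x: "x \<in> S2" and y: "y \<in> S2"
      have h: "K2 c y = cnj (K2 y c)" by (rule psd_herm[OF p2[folded S2_def] fS2 y cS2])
      have gx: "g z = K2 z c" if "z \<in> S2" for z
      proof (cases "z \<in> S1")
        case True
        then have "z \<in> insert c C" using that AE AC CE by (auto simp: S1_def S2_def)
        then show ?thesis using True agr by (auto simp: g_def)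
      qed (simp add: g_def)
      have "K' x y = K2' x y" using KK2 x y by auto
      then show "K x y = K2 x y" using x y r h kc gx[OF x] gx[OF y] by (simp add: K_def K2'_def field_simps)
    qed
    ultimately show ?thesis using eqall by (auto simp: S1_def S2_def)
  qed
qed

definition tker :: "(int \<Rightarrow> nat \<Rightarrow> nat \<Rightarrow> complex) \<Rightarrow> nat \<times> nat \<Rightarrow> nat \<times> nat \<Rightarrow> complex" where
  "tker G x y = G (int (fst x) - int (fst y)) (snd x) (snd y)"

lemma toep_ext1:
  assumes m: "m \<ge> 1" and T: "psd ({..<m} \<times> {..<k}) (tker G)"
  shows "\<exists>G'. (\<forall>d. \<bar>d\<bar> < int m \<longrightarrow> G' d = G d) \<and> psd ({..<Suc m} \<times> {..<k}) (tker G')"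
proof -
  define A where "A = {0::nat} \<times> {..<k}"
  define C where "C = {1..<m} \<times> {..<k}"
  define E where "E = {m} \<times> {..<k}"
  have AC: "A \<union> C = {..<m} \<times> {..<k}" using m by (auto simp: A_def C_def)
  define f where "f x = (Suc (fst x), snd x)" for x :: "nat \<times> nat"
  have CE: "C \<union> E = f ` ({..<m} \<times> {..<k})"
  proof
    show "C \<union> E \<subseteq> f ` ({..<m} \<times> {..<k})"
    proof
      fix x assume "x \<in> C \<union> E"
      then have "fst x \<ge> 1" "fst x \<le> m" "snd x < k" using m by (auto simp: C_def E_def)
      then have "x = f (fst x - 1, snd x)" "(fst x - 1, snd x) \<in> {..<m} \<times> {..<k}"
        by (auto simp: f_def)
      then show "x \<in> f ` ({..<m} \<times> {..<k})" by blast
    qed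
    show "f ` ({..<m} \<times> {..<k}) \<subseteq> C \<union> E" by (auto simp: f_def C_def E_def)
  qed
  have injf: "inj_on f ({..<m} \<times> {..<k})" by (auto simp: inj_on_def f_def prod_eq_iff)
  have tf: "(\<lambda>x y. tker G (f x) (f y)) = tker G" by (simp add: tker_def f_def fun_eq_iff)
  have p2: "psd (C \<union> E) (tker G)"
    unfolding CE by (rule psd_reindex[OF injf]) (use T tf in simp)
  have p1: "psd (A \<union> C) (tker G)" using T AC by simp
  obtain K where K: "psd (A \<union> C \<union> E) K"
    and K1: "\<forall>x\<in>A \<union> C. \<forall>y\<in>A \<union> C. K x y = tker G x y"
    and K2: "\<forall>x\<in>C \<union> E. \<forall>y\<in>C \<union> E. K x y = tker G x y"
  proof -
    have "finite C" "finite A" "finite E" by (auto simp: A_def C_def E_def)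
    moreover have "A \<inter> C = {}" "C \<inter> E = {}" "A \<inter> E = {}" using m by (auto simp: A_def C_def E_def)
    ultimately show ?thesis using completion[of C A E "tker G" "tker G"] p1 p2 that by blast
  qed
  have all: "A \<union> C \<union> E = {..<Suc m} \<times> {..<k}" using m by (auto simp: A_def C_def E_def)
  define G' where "G' d = (if d = int m then (\<lambda>p q. K (m,p) (0,q))
      else if d = - int m then (\<lambda>p q. K (0,p) (m,q)) else G d)" for d
  have "psd ({..<Suc m} \<times> {..<k}) (tker G')"
  proof -
    have "psd ({..<Suc m} \<times> {..<k}) K" using K all by simp
    moreover have "K x y = tker G' x y" if x: "x \<in> {..<Suc m} \<times> {..<k}" and y: "y \<in> {..<Suc m} \<times> {..<k}" for x y
    proof -
      obtain i p j q where xy: "x = (i,p)" "y = (j,q)" by (cases x, cases y) auto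
      have i: "i \<le> m" "p < k" and j: "j \<le> m" "q < k" using x y xy by auto
      consider "int i - int j = int m" | "int i - int j = - int m" | "\<bar>int i - int j\<bar> < int m"
        using i j by linarith
      then show ?thesis
      proof cases
        case 1
        then have "i = m" "j = 0" using i j by auto
        then show ?thesis using m xy by (simp add: tker_def G'_def)
      next
        case 2
        then have "i = 0" "j = m" using i j by auto
        then show ?thesis using m xy by (simp add: tker_def G'_def)
      next
        case 3
        then have G'eq: "tker G' x y = tker G x y" using xy by (auto simp: tker_def G'_def)
        show ?thesis
        proof (cases "i < m \<and> j < m")
          case True
          then have "x \<in> A \<union> C" "y \<in> A \<union> C" using xy i j AC by auto
          then show ?thesis using K1 G'eq by auto
        next
          case False
          then have "i \<ge> 1" "j \<ge> 1" using 3 i j by auto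
          then have "x \<in> C \<union> E" "y \<in> C \<union> E" using xy i j by (auto simp: C_def E_def)
          then show ?thesis using K2 G'eq by auto
        qed
      qed
    qed
    ultimately show ?thesis using psd_cong by blast
  qed
  moreover have "\<forall>d. \<bar>d\<bar> < int m \<longrightarrow> G' d = G d" by (auto simp: G'_def)
  ultimately show ?thesis by blast
qed

lemma toep_ext:
  assumes n: "n \<ge> 1" and T: "psd ({..<n} \<times> {..<k}) (tker G)" and M: "M \<ge> n"
  shows "\<exists>G'. (\<forall>d. \<bar>d\<bar> < int n \<longrightarrow> G' d = G d) \<and> psd ({..<M} \<times> {..<k}) (tker G')"
  using M
proof (induct M rule: dec_induct)
  case base
  then show ?case using T by blast
next
  case (step M)
  then obtain G' where G': "\<forall>d. \<bar>d\<bar> < int n \<longrightarrow> G' d = G d" "psd ({..<M} \<times> {..<k}) (tker G')" by blast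
  obtain G'' where G'': "\<forall>d. \<bar>d\<bar> < int M \<longrightarrow> G'' d = G' d" "psd ({..<Suc M} \<times> {..<k}) (tker G'')"
    using toep_ext1[OF _ G'(2)] step n by auto
  have "\<forall>d. \<bar>d\<bar> < int n \<longrightarrow> G'' d = G d" using G' G''(1) step(1) by force
  then show ?case using G''(2) by blast
qed

locale phimap =
  fixes \<Phi> :: "(nat \<Rightarrow> nat \<Rightarrow> complex) \<Rightarrow> 'h::complex_inner \<Rightarrow> 'h" and k :: nat
  assumes \<Phi>add: "\<Phi> (\<lambda>p q. X p q + Y p q) h = \<Phi> X h + \<Phi> Y h"
    and \<Phi>scale: "\<Phi> (\<lambda>p q. c * X p q) h = c *\<^sub>C \<Phi> X h"
    and \<Phi>ladd: "\<Phi> X (x + y) = \<Phi> X x + \<Phi> X y"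
    and \<Phi>lscale: "\<Phi> X (c *\<^sub>C x) = c *\<^sub>C \<Phi> X x"
    and \<Phi>pos: "(\<And>u. cnonneg (\<Sum>p<k. \<Sum>q<k. cnj (u p) * B p q * u q)) \<Longrightarrow> cnonneg (cinner (\<Phi> B h) h)"
begin

lemma \<Phi>zero: "\<Phi> (\<lambda>p q. 0) h = 0"
  using \<Phi>add[of "\<lambda>p q. 0" "\<lambda>p q. 0" h] by simp

lemma \<Phi>sum: "\<Phi> (\<lambda>p q. \<Sum>i\<in>S. F i p q) h = (\<Sum>i\<in>S. \<Phi> (F i) h)"
proof (induct S rule: infinite_finite_induct)
  case (insert i S)
  then show ?case using \<Phi>add[of "F i" "\<lambda>p q. \<Sum>i\<in>S. F i p q" h] by simp
qed (simp_all add: \<Phi>zero)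

lemma \<Phi>lzero: "\<Phi> X 0 = 0"
  using \<Phi>ladd[of X 0 0] by simp

lemma \<Phi>lsum: "\<Phi> X (\<Sum>i\<in>S. f i) = (\<Sum>i\<in>S. \<Phi> X (f i))"
  by (induct S rule: infinite_finite_induct) (simp_all add: \<Phi>lzero \<Phi>ladd)

end

lemma root_sum:
  assumes N: "N > 0" and p: "p < N" and q: "q < N"
  shows "(\<Sum>l<N. (cis (2*pi/N) ^ l) ^ p * cnj ((cis (2*pi/N) ^ l) ^ q)) = (if p = q then of_nat N else 0)"
proof -
  define \<theta> where "\<theta> = 2*pi*(real p - real q)/N"
  define r where "r = cis \<theta>"
  have trm: "(cis (2*pi/N) ^ l) ^ p * cnj ((cis (2*pi/N) ^ l) ^ q) = r ^ l" for l
  proof -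
    have "(cis (2*pi/N) ^ l) ^ p * cnj ((cis (2*pi/N) ^ l) ^ q)
        = (cis (2*pi/N) ^ p * cnj (cis (2*pi/N) ^ q)) ^ l"
      by (simp add: power_mult[symmetric] mult.commute power_mult_distrib)
    also have "cis (2*pi/N) ^ p * cnj (cis (2*pi/N) ^ q) = r"
      by (simp add: r_def \<theta>_def Complex.DeMoivre cis_cnj cis_mult diff_divide_distrib algebra_simps)
    finally show ?thesis .
  qed
  show ?thesis
  proof (cases "p = q")
    case True
    then have "r = 1" by (simp add: r_def \<theta>_def)
    then show ?thesis using True trm by simp
  next
    case False
    have r1: "r \<noteq> 1"
    proof
      assume "r = 1"
      then have "cos \<theta> = 1" unfolding r_def by (metis cis.sel(1) one_complex.sel(1))
      then obtain n :: int where n: "\<theta> = n * 2 * pi" by (auto simp: cos_one_2pi_int)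
      then have "(2*pi) * (real p - real q) = (2*pi) * (n * N)" using N by (simp add: \<theta>_def field_simps)
      then have "real p - real q = n * N" by (simp only: mult_cancel_left) simp
      then have e: "int p - int q = n * int N" by (metis of_int_eq_iff of_int_diff of_int_mult of_int_of_nat_eq)
      show False
      proof (cases "n = 0")
        case True then show False using e False by simp
      next
        case n0: False
        have "\<bar>int p - int q\<bar> < int N" using p q by linarith
        moreover have "\<bar>n * int N\<bar> \<ge> int N" using n0 N by (simp add: abs_mult)
        ultimately show False using e by simp
      qed
    qed
    have rN: "r ^ N = 1"
    proof -
      have "r ^ N = cis (2 * pi * of_int (int p - int q))"
        using N by (simp add: r_def Complex.DeMoivre \<theta>_def)
      also have "\<dots> = 1" by (rule cis_multiple_2pi) simp
      finally show ?thesis .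
    qed
    have "(\<Sum>l<N. r ^ l) = 0" using r1 rN by (simp add: geometric_sum)
    then show ?thesis using False trm by simp
  qed
qed

lemma count_pairs:
  assumes i: "i < n" and j: "j < n" and nM: "n \<le> M"
  shows "(\<Sum>a<M. \<Sum>b<M. (if b + i = a + j then 1 else 0 :: complex)) = of_nat (M - nat \<bar>int i - int j\<bar>)"
proof -
  have inner: "(\<Sum>b<M. (if b + i = a + j then 1 else 0 :: complex)) = (if i \<le> a + j \<and> a + j - i < M then 1 else 0)" for a
  proof -
    have "(\<Sum>b<M. (if b + i = a + j then 1 else 0 :: complex))
        = (\<Sum>b<M. if b = a + j - i then (if i \<le> a + j then 1 else 0) else 0)"
      by (rule sum.cong) auto
    then show ?thesis by simp
  qed
  have "(\<Sum>a<M. \<Sum>b<M. (if b + i = a + j then 1 else 0 :: complex))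
      = (\<Sum>a<M. if i \<le> a + j \<and> a + j - i < M then 1 else 0)"
    by (simp add: inner)
  also have "\<dots> = (\<Sum>a\<in>{a\<in>{..<M}. i \<le> a + j \<and> a + j - i < M}. 1)"
    by (rule sum.inter_filter[symmetric]) simp
  also have "\<dots> = of_nat (card {a\<in>{..<M}. i \<le> a + j \<and> a + j - i < M})" by (rule sum_constant[THEN trans]) simp
  also have "card {a\<in>{..<M}. i \<le> a + j \<and> a + j - i < M} = M - nat \<bar>int i - int j\<bar>"
  proof (cases "j \<le> i")
    case True
    have "{a\<in>{..<M}. i \<le> a + j \<and> a + j - i < M} = {i - j..<M}" using True by auto
    moreover have "nat \<bar>int i - int j\<bar> = i - j" using True by auto
    ultimately show ?thesis by simp
  next
    case False
    have "{a\<in>{..<M}. i \<le> a + j \<and> a + j - i < M} = {..<M - (j - i)}" using False by auto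
    moreover have "nat \<bar>int i - int j\<bar> = j - i" using False by auto
    ultimately show ?thesis by simp
  qed
  finally show ?thesis .
qed

lemma sum_times: "(\<Sum>x\<in>A \<times> B. g x) = (\<Sum>a\<in>A. \<Sum>b\<in>B. g (a, b))"
  by (simp add: sum.cartesian_product)

context phimap begin

lemma B_psd:
  assumes T: "psd ({..<M} \<times> {..<k}) (tker G)"
  shows "cnonneg (\<Sum>p<k. \<Sum>q<k. cnj (u p) * (\<Sum>a<M. \<Sum>b<M. cnj (z ^ a) * z ^ b * G (int a - int b) p q) * u q)"
proof -
  define v where "v x = z ^ fst x * u (snd x)" for x
  have c: "cnonneg (\<Sum>x\<in>{..<M} \<times> {..<k}. \<Sum>y\<in>{..<M} \<times> {..<k}. cnj (v x) * tker G x y * v y)"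
    using T unfolding psd_def by simp
  have "(\<Sum>x\<in>{..<M} \<times> {..<k}. \<Sum>y\<in>{..<M} \<times> {..<k}. cnj (v x) * tker G x y * v y)
      = (\<Sum>a<M. \<Sum>p<k. \<Sum>b<M. \<Sum>q<k. cnj (z ^ a * u p) * G (int a - int b) p q * (z ^ b * u q))"
    by (simp add: sum_times v_def tker_def)
  also have "\<dots> = (\<Sum>p<k. \<Sum>q<k. cnj (u p) * (\<Sum>a<M. \<Sum>b<M. cnj (z ^ a) * z ^ b * G (int a - int b) p q) * u q)"
    by (simp add: sum_distrib_left sum_distrib_right sum.swap[where A="{..<k}" and B="{..<M}"] algebra_simps)
  finally show ?thesis using c by simp
qed

lemma Phi_expand:
  "\<Phi> (\<lambda>p q. \<Sum>a<M. \<Sum>b<M. cnj (z ^ a) * z ^ b * G (int a - int b) p q) (\<Sum>j<n. cnj (z ^ j) *\<^sub>C x j)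
   = (\<Sum>a<M. \<Sum>b<M. \<Sum>j<n. (cnj (z ^ a) * z ^ b * cnj (z ^ j)) *\<^sub>C \<Phi> (G (int a - int b)) (x j))"
  by (simp add: \<Phi>sum \<Phi>scale \<Phi>lsum \<Phi>lscale cscale_sum_right cscale_cscale)

lemma expand_main:
  "cinner (\<Phi> (\<lambda>p q. \<Sum>a<M. \<Sum>b<M. cnj (z ^ a) * z ^ b * G (int a - int b) p q) (\<Sum>j<n. cnj (z ^ j) *\<^sub>C x j))
      (\<Sum>i<n. cnj (z ^ i) *\<^sub>C x i)
   = (\<Sum>a<M. \<Sum>b<M. \<Sum>j<n. \<Sum>i<n. (z ^ (b + i) * cnj (z ^ (a + j))) * cinner (\<Phi> (G (int a - int b)) (x j)) (x i))"
  unfolding Phi_expand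
  apply (simp only: cinner_sum_left)
  apply (simp only: cinner_sum_right)
  apply (simp add: cinner_cscale_left cinner_cscale_right power_add algebra_simps)
  done


lemma cnonneg_scale_pos: "cnonneg (of_nat N * t) \<Longrightarrow> N > 0 \<Longrightarrow> cnonneg t"
  by (auto simp: cnonneg_def zero_le_mult_iff)

lemma fejer:
  assumes T: "psd ({..<M} \<times> {..<k}) (tker G)" and nM: "n \<le> M"
  shows "cnonneg (\<Sum>j<n. \<Sum>i<n. of_nat (M - nat \<bar>int i - int j\<bar>) * cinner (\<Phi> (G (int i - int j)) (x j)) (x i))"
proof (cases "M = 0")
  case True
  then show ?thesis using nM by (simp add: cnonneg_def)
next
  case False
  define N where "N = M + n"
  have N: "N > 0" using False by (simp add: N_def)
  define \<omega> where "\<omega> = cis (2*pi/N)"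
  define c where "c a b j i = cinner (\<Phi> (G (int a - int b)) (x j)) (x i)" for a b j i
  define S where "S l = cinner (\<Phi> (\<lambda>p q. \<Sum>a<M. \<Sum>b<M. cnj ((\<omega>^l) ^ a) * (\<omega>^l) ^ b * G (int a - int b) p q)
      (\<Sum>j<n. cnj ((\<omega>^l) ^ j) *\<^sub>C x j)) (\<Sum>i<n. cnj ((\<omega>^l) ^ i) *\<^sub>C x i)" for l
  have pos: "cnonneg (\<Sum>l<N. S l)"
    unfolding S_def by (intro cnonneg_sum \<Phi>pos B_psd[OF T])
  have "(\<Sum>l<N. S l) = (\<Sum>l<N. \<Sum>a<M. \<Sum>b<M. \<Sum>j<n. \<Sum>i<n. ((\<omega>^l) ^ (b + i) * cnj ((\<omega>^l) ^ (a + j))) * c a b j i)"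
    unfolding S_def c_def by (simp only: expand_main)
  also have "\<dots> = (\<Sum>a<M. \<Sum>b<M. \<Sum>j<n. \<Sum>i<n. \<Sum>l<N. ((\<omega>^l) ^ (b + i) * cnj ((\<omega>^l) ^ (a + j))) * c a b j i)"
    by (simp only: sum.swap[where A="{..<N}" and B="{..<M}"] sum.swap[where A="{..<N}" and B="{..<n}"])
  also have "\<dots> = (\<Sum>a<M. \<Sum>b<M. \<Sum>j<n. \<Sum>i<n. (\<Sum>l<N. (\<omega>^l) ^ (b + i) * cnj ((\<omega>^l) ^ (a + j))) * c a b j i)"
    by (simp only: sum_distrib_right[symmetric])
  also have "\<dots> = (\<Sum>a<M. \<Sum>b<M. \<Sum>j<n. \<Sum>i<n. (if b + i = a + j then 1 else 0) * (of_nat N * c i j j i))"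
  proof (intro sum.cong refl)
    fix a b j i assume a: "a \<in> {..<M}" and b: "b \<in> {..<M}" and j: "j \<in> {..<n}" and i: "i \<in> {..<n}"
    have "b + i < N" "a + j < N" using a b i j by (auto simp: N_def)
    then have r: "(\<Sum>l<N. (\<omega>^l) ^ (b + i) * cnj ((\<omega>^l) ^ (a + j))) = (if b + i = a + j then of_nat N else 0)"
      unfolding \<omega>_def by (rule root_sum[OF N])
    have "c a b j i = c i j j i" if e: "b + i = a + j"
    proof -
      have "int a - int b = int i - int j" using e by linarith
      then show ?thesis by (simp add: c_def)
    qed
    then show "(\<Sum>l<N. (\<omega>^l) ^ (b + i) * cnj ((\<omega>^l) ^ (a + j))) * c a b j i
        = (if b + i = a + j then 1 else 0) * (of_nat N * c i j j i)"
      unfolding r by auto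
  qed
  also have "\<dots> = (\<Sum>j<n. \<Sum>i<n. \<Sum>a<M. \<Sum>b<M. (if b + i = a + j then 1 else 0) * (of_nat N * c i j j i))"
    by (simp only: sum.swap[where A="{..<M}" and B="{..<n}"])
  also have "\<dots> = (\<Sum>j<n. \<Sum>i<n. (\<Sum>a<M. \<Sum>b<M. (if b + i = a + j then 1 else 0)) * (of_nat N * c i j j i))"
    by (simp only: sum_distrib_right[symmetric])
  also have "\<dots> = (\<Sum>j<n. \<Sum>i<n. of_nat (M - nat \<bar>int i - int j\<bar>) * (of_nat N * c i j j i))"
    by (intro sum.cong refl) (simp add: count_pairs nM)
  also have "\<dots> = of_nat N * (\<Sum>j<n. \<Sum>i<n. of_nat (M - nat \<bar>int i - int j\<bar>) * cinner (\<Phi> (G (int i - int j)) (x j)) (x i))"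
    unfolding c_def sum_distrib_left by (intro sum.cong refl) (simp only: mult.left_commute)
  finally have eq: "(\<Sum>l<N. S l) = of_nat N * (\<Sum>j<n. \<Sum>i<n. of_nat (M - nat \<bar>int i - int j\<bar>) * cinner (\<Phi> (G (int i - int j)) (x j)) (x i))" .
  show ?thesis using pos unfolding eq by (rule cnonneg_scale_pos) (rule N)
qed

end

lemma lim_lemma:
  assumes h: "\<And>M. M \<ge> n \<Longrightarrow> cnonneg (of_nat M * Q - R)"
  shows "cnonneg Q"
proof -
  have i1: "real n * Im Q - Im R = 0" using h[of n] by (simp add: cnonneg_def)
  have i2: "real (Suc n) * Im Q - Im R = 0" using h[of "Suc n"] by (simp add: cnonneg_def)
  have im: "Im Q = 0" using i1 i2 by (simp add: algebra_simps)
  have re: "Re Q \<ge> 0"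
  proof (rule ccontr)
    assume "\<not> Re Q \<ge> 0"
    then have neg: "Re Q < 0" by simp
    obtain M0 :: nat where M0: "(\<bar>Re R\<bar> + 1) / (- Re Q) < real M0" using reals_Archimedean2 by blast
    define M where "M = max n M0"
    have "real M0 \<le> real M" by (simp add: M_def)
    then have "(\<bar>Re R\<bar> + 1) / (- Re Q) < real M" using M0 by linarith
    moreover have "0 < - Re Q" using neg by simp
    ultimately have "\<bar>Re R\<bar> + 1 < real M * (- Re Q)" using pos_divide_less_eq by blast
    moreover have "real M * Re Q - Re R \<ge> 0" using h[of M] by (simp add: cnonneg_def M_def)
    ultimately show False by (simp add: algebra_simps)
  qed
  show ?thesis using im re by (simp add: cnonneg_def)
qed

lemma block_to_psd:
  assumes "block_cmat_pos m k X"
  shows "psd ({..<m} \<times> {..<k}) (\<lambda>x y. X (fst x) (fst y) (snd x) (snd y))"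
  unfolding psd_def
proof
  fix v :: "nat \<times> nat \<Rightarrow> complex"
  have "cnonneg (\<Sum>i<m. \<Sum>j<m. \<Sum>p<k. \<Sum>q<k. cnj (v (i,p)) * X i j p q * v (j,q))"
    using assms unfolding block_cmat_pos_def by (rule allE[where x="\<lambda>i p. v (i,p)"]) simp
  moreover have "(\<Sum>x\<in>{..<m} \<times> {..<k}. \<Sum>y\<in>{..<m} \<times> {..<k}. cnj (v x) * X (fst x) (fst y) (snd x) (snd y) * v y)
     = (\<Sum>i<m. \<Sum>j<m. \<Sum>p<k. \<Sum>q<k. cnj (v (i,p)) * X i j p q * v (j,q))"
    by (simp add: sum_times sum.swap[where A="{..<k}" and B="{..<m}"])
  ultimately show "cnonneg (\<Sum>x\<in>{..<m} \<times> {..<k}. \<Sum>y\<in>{..<m} \<times> {..<k}. cnj (v x) * X (fst x) (fst y) (snd x) (snd y) * v y)"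
    by simp
qed

context phimap begin

lemma core:
  assumes T: "psd ({..<n} \<times> {..<k}) (tker G)"
  shows "cnonneg (\<Sum>i<n. \<Sum>j<n. cinner (\<Phi> (G (int i - int j)) (x j)) (x i))"
proof (cases "n = 0")
  case True then show ?thesis by (simp add: cnonneg_def)
next
  case False
  define Q where "Q = (\<Sum>j<n. \<Sum>i<n. cinner (\<Phi> (G (int i - int j)) (x j)) (x i))"
  define R where "R = (\<Sum>j<n. \<Sum>i<n. of_nat (nat \<bar>int i - int j\<bar>) * cinner (\<Phi> (G (int i - int j)) (x j)) (x i))"
  have "cnonneg (of_nat M * Q - R)" if M: "M \<ge> n" for M
  proof -
    obtain G' where G': "\<forall>d. \<bar>d\<bar> < int n \<longrightarrow> G' d = G d" "psd ({..<M} \<times> {..<k}) (tker G')"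
      using toep_ext[OF _ T M] False by auto
    have f: "cnonneg (\<Sum>j<n. \<Sum>i<n. of_nat (M - nat \<bar>int i - int j\<bar>) * cinner (\<Phi> (G' (int i - int j)) (x j)) (x i))"
      by (rule fejer[OF G'(2) M])
    have "(\<Sum>j<n. \<Sum>i<n. of_nat (M - nat \<bar>int i - int j\<bar>) * cinner (\<Phi> (G' (int i - int j)) (x j)) (x i))
        = (\<Sum>j<n. \<Sum>i<n. (of_nat M - of_nat (nat \<bar>int i - int j\<bar>)) * cinner (\<Phi> (G (int i - int j)) (x j)) (x i))"
    proof (intro sum.cong refl)
      fix j i assume j: "j \<in> {..<n}" and i: "i \<in> {..<n}"
      have d: "\<bar>int i - int j\<bar> < int n" using i j by auto
      have "nat \<bar>int i - int j\<bar> \<le> M" using d M by linarith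
      then show "of_nat (M - nat \<bar>int i - int j\<bar>) * cinner (\<Phi> (G' (int i - int j)) (x j)) (x i)
          = (of_nat M - of_nat (nat \<bar>int i - int j\<bar>)) * cinner (\<Phi> (G (int i - int j)) (x j)) (x i)"
        using G'(1) d by (simp add: of_nat_diff)
    qed
    also have "\<dots> = of_nat M * Q - R"
      by (simp add: Q_def R_def sum_distrib_left sum_subtractf left_diff_distrib)
    finally show ?thesis using f by simp
  qed
  then have "cnonneg Q" by (rule lim_lemma)
  moreover have "Q = (\<Sum>i<n. \<Sum>j<n. cinner (\<Phi> (G (int i - int j)) (x j)) (x i))"
    unfolding Q_def by (rule sum.swap)
  ultimately show ?thesis by simp
qed

end

lemma allE2: "\<forall>x y. P x y \<Longrightarrow> P a b" by blast

lemma approx_cnonneg: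
  assumes C: "C \<ge> 0" and h: "\<And>\<epsilon>. \<epsilon> > 0 \<Longrightarrow> \<exists>Q'. cnonneg Q' \<and> cmod (Q - Q') \<le> C * \<epsilon>"
  shows "cnonneg Q"
proof (rule ccontr)
  assume nn: "\<not> cnonneg Q"
  define \<delta> where "\<delta> = (if Im Q \<noteq> 0 then \<bar>Im Q\<bar> else - Re Q)"
  have d: "\<delta> > 0" using nn by (auto simp: \<delta>_def cnonneg_def)
  define \<epsilon> where "\<epsilon> = \<delta> / (2 * (C + 1))"
  have e: "\<epsilon> > 0" using d C by (simp add: \<epsilon>_def)
  have Ce: "C * \<epsilon> < \<delta>"
  proof -
    have "C * \<epsilon> = \<delta> * (C / (2 * (C + 1)))" by (simp add: \<epsilon>_def)
    also have "C / (2 * (C + 1)) < 1" using C by (simp add: divide_less_eq)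
    then have "\<delta> * (C / (2 * (C + 1))) < \<delta> * 1" using d by (intro mult_strict_left_mono) auto
    finally show ?thesis by simp
  qed
  obtain Q' where Q': "cnonneg Q'" "cmod (Q - Q') \<le> C * \<epsilon>" using h[OF e] by blast
  have "\<bar>Im (Q - Q')\<bar> \<le> cmod (Q - Q')" by (rule abs_Im_le_cmod)
  moreover have "\<bar>Re (Q - Q')\<bar> \<le> cmod (Q - Q')" by (rule abs_Re_le_cmod)
  ultimately have "\<bar>Im Q\<bar> < \<delta>" "Re Q > - \<delta>" using Q' Ce by (auto simp: cnonneg_def)
  then show False using nn by (auto simp: \<delta>_def cnonneg_def split: if_splits)
qed

theorem corollary7p4:
  fixes \<psi> :: "'a::cstar_algebra \<Rightarrow> 'h::{complex_inner, complete_space} \<Rightarrow> 'h"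
    and n :: nat and a :: "int \<Rightarrow> 'a"
  assumes "nuclear TYPE('a)"
    and "positive_map \<psi>"
    and "mat_pos n (\<lambda>i j. a (int i - int j))"
  shows "opmat_pos n (\<lambda>i j. \<psi> (a (int i - int j)))"
proof -
  interpret posmap \<psi> using assms(2) by unfold_locales
  show ?thesis unfolding opmat_pos_def
  proof
    fix x :: "nat \<Rightarrow> 'h"
    define Q where "Q = (\<Sum>i<n. \<Sum>j<n. cinner (\<psi> (a (int i - int j)) (x j)) (x i))"
    define Cf where "Cf i j = (SOME C. \<forall>b. cmod (cinner (\<psi> b (x j)) (x i)) \<le> C * norm b)" for i j
    have Cf: "cmod (cinner (\<psi> b (x j)) (x i)) \<le> Cf i j * norm b" for i j b
      using someI_ex[OF cont[of "x j" "x i"]] unfolding Cf_def by blast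
    define Ctot where "Ctot = (\<Sum>i<n. \<Sum>j<n. \<bar>Cf i j\<bar>)"
    have Ctot: "Ctot \<ge> 0" unfolding Ctot_def by (intro sum_nonneg) auto
    have "\<exists>Q'. cnonneg Q' \<and> cmod (Q - Q') \<le> Ctot * \<epsilon>" if e: "\<epsilon> > 0" for \<epsilon>
    proof -
      define F where "F = a ` {- int n..int n}"
      have "finite F" by (simp add: F_def)
      then obtain k \<phi> \<theta> where ccp1: "ccp_to_mat k \<phi>" and ccp2: "ccp_from_mat k \<theta>"
        and appr: "\<forall>b\<in>F. norm (\<theta> (\<phi> b) - b) < \<epsilon>"
        using assms(1) e unfolding nuclear_def by blast
      define G where "G d = \<phi> (a d)" for d
      have T: "psd ({..<n} \<times> {..<k}) (tker G)"
      proof -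
        have c1: "\<And>m X. mat_pos m X \<Longrightarrow> block_cmat_pos m k (\<lambda>i j. \<phi> (X i j))"
          using ccp1[unfolded ccp_to_mat_def, THEN conjunct2, THEN conjunct2, THEN conjunct1] by blast
        have bc: "block_cmat_pos n k (\<lambda>i j. \<phi> (a (int i - int j)))"
          by (rule c1[OF assms(3)])
        have eq: "tker G = (\<lambda>x y. \<phi> (a (int (fst x) - int (fst y))) (snd x) (snd y))"
          by (simp add: fun_eq_iff tker_def G_def)
        show ?thesis unfolding eq by (rule block_to_psd[OF bc])
      qed
      define \<Phi> where "\<Phi> B h = \<psi> (\<theta> B) h" for B h
      note c2 = ccp2[unfolded ccp_from_mat_def]
      have th_add: "\<theta> (\<lambda>p q. X p q + Y p q) = \<theta> X + \<theta> Y" for X Y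
        using c2[THEN conjunct2, THEN conjunct1] by (rule allE2)
      have th_scale: "\<theta> (\<lambda>p q. c * X p q) = c *\<^sub>C \<theta> X" for c X
        using c2[THEN conjunct2, THEN conjunct2, THEN conjunct1] by (rule allE2)
      have th_cp: "\<And>m X. block_cmat_pos m k X \<Longrightarrow> mat_pos m (\<lambda>i j. \<theta> (X i j))"
        using c2[THEN conjunct2, THEN conjunct2, THEN conjunct2, THEN conjunct1] by blast
      have th_pos: "cstar_pos (\<theta> B)" if hB: "\<And>u. cnonneg (\<Sum>p<k. \<Sum>q<k. cnj (u p) * B p q * u q)" for B
      proof -
        have "block_cmat_pos 1 k (\<lambda>i j. B)"
          unfolding block_cmat_pos_def using hB by simp
        then have "mat_pos 1 (\<lambda>i j. \<theta> B)" by (rule th_cp)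
        then obtain Y where Y: "\<forall>i<(1::nat). \<forall>j<(1::nat). \<theta> B = (\<Sum>k<(1::nat). adj (Y k i) * Y k j)"
          unfolding mat_pos_def by (elim exE) (rule that)
        have "\<theta> B = adj (Y 0 0) * Y 0 0" using Y[rule_format, of 0 0] by simp
        then show ?thesis unfolding cstar_pos_def by (rule exI)
      qed
      interpret phimap \<Phi> k
      proof
        show "\<Phi> (\<lambda>p q. X p q + Y p q) h = \<Phi> X h + \<Phi> Y h" for X Y h
          by (simp add: \<Phi>_def th_add add)
        show "\<Phi> (\<lambda>p q. c * X p q) h = c *\<^sub>C \<Phi> X h" for c X h
          by (simp add: \<Phi>_def th_scale scale)
        show "\<Phi> X (y + z) = \<Phi> X y + \<Phi> X z" for X y z
          by (simp add: \<Phi>_def lin_add)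
        show "\<Phi> X (c *\<^sub>C y) = c *\<^sub>C \<Phi> X y" for X c y
          by (simp add: \<Phi>_def lin_scale)
        show "cnonneg (cinner (\<Phi> B h) h)" if hyp: "\<And>u. cnonneg (\<Sum>p<k. \<Sum>q<k. cnj (u p) * B p q * u q)" for B h
        proof -
          obtain b where b: "\<theta> B = adj b * b" using th_pos[OF hyp] unfolding cstar_pos_def by blast
          show ?thesis using pos[of b h] by (simp add: \<Phi>_def b)
        qed
      qed
      define Q' where "Q' = (\<Sum>i<n. \<Sum>j<n. cinner (\<psi> (\<theta> (\<phi> (a (int i - int j)))) (x j)) (x i))"
      have pQ': "cnonneg Q'" using core[OF T, of x] by (simp add: Q'_def \<Phi>_def G_def)
      have eqQ: "Q - Q' = (\<Sum>i<n. \<Sum>j<n. cinner (\<psi> (a (int i - int j) - \<theta> (\<phi> (a (int i - int j)))) (x j)) (x i))"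
        by (simp add: Q_def Q'_def diff cinner_diff_left sum_subtractf)
      have "cmod (Q - Q') \<le> (\<Sum>i<n. \<Sum>j<n. cmod (cinner (\<psi> (a (int i - int j) - \<theta> (\<phi> (a (int i - int j)))) (x j)) (x i)))"
        unfolding eqQ by (rule order_trans[OF norm_sum sum_mono[OF norm_sum]])
      also have "\<dots> \<le> (\<Sum>i<n. \<Sum>j<n. \<bar>Cf i j\<bar> * \<epsilon>)"
      proof (intro sum_mono)
        fix i j assume i: "i \<in> {..<n}" and j: "j \<in> {..<n}"
        have "a (int i - int j) \<in> F" using i j by (auto simp: F_def)
        then have nb: "norm (a (int i - int j) - \<theta> (\<phi> (a (int i - int j)))) < \<epsilon>"
          using appr by (metis norm_minus_commute)
        have "cmod (cinner (\<psi> (a (int i - int j) - \<theta> (\<phi> (a (int i - int j)))) (x j)) (x i))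
            \<le> Cf i j * norm (a (int i - int j) - \<theta> (\<phi> (a (int i - int j))))" by (rule Cf)
        also have "\<dots> \<le> \<bar>Cf i j\<bar> * norm (a (int i - int j) - \<theta> (\<phi> (a (int i - int j))))"
          by (rule mult_right_mono) auto
        also have "\<dots> \<le> \<bar>Cf i j\<bar> * \<epsilon>"
          by (rule mult_left_mono) (use nb in auto)
        finally show "cmod (cinner (\<psi> (a (int i - int j) - \<theta> (\<phi> (a (int i - int j)))) (x j)) (x i)) \<le> \<bar>Cf i j\<bar> * \<epsilon>" .
      qed
      also have "\<dots> = Ctot * \<epsilon>" by (simp add: Ctot_def sum_distrib_right)
      finally show ?thesis using pQ' by blast
    qed
    then have "cnonneg Q" by (intro approx_cnonneg[OF Ctot]) blast
    then show "cnonneg (\<Sum>i<n. \<Sum>j<n. cinner (\<psi> (a (int i - int j)) (x j)) (x i))" by (simp add: Q_def)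
  qed
qed

end
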